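(* Let $n\ge1$, $\omega\ge1$, and let $\mathcal{R}_\omega(\mathcal{C}^*_{n,A})$ be the set of regions of $\mathcal{C}^*_{n,A}$ of level $\omega$. For $\Omega\in\mathcal{R}_\omega(\mathcal{C}^*_{n,A})$, the graph $G_1(\Omega)$ has exactly $\omega$ connected components, which can be uniquely listed as $D_1,\dots,D_\omega$ so that $x_j-x_i>a_1$ whenever $i\in D_u$, $j\in D_v$, $u<v$ (for any $\bm x\in\Omega$); let $\Omega_j$ be the region of $\mathcal{C}^*_{D_j,A}$ containing the restriction $(x_i)_{i\in D_j}$. Then $\phi_\omega(\Omega)=(\Omega_1,\dots,\Omega_\omega)$ is independent of $\bm x\in\Omega$, each $\Omega_j$ has level 1, and \[\phi_\omega:\mathcal{R}_\omega(\mathcal{C}^*_{n,A})\longrightarrow\bigsqcup_{(D_1,\dots,D_\omega)}\mathcal{R}_1(\mathcal{C}^*_{D_1,A})\times\cdots\times\mathcal{R}_1(\mathcal{C}^*_{D_\omega,A})\] is a bijection, where the union is over all ordered set partitions $(D_1,\dots,D_\omega)$ of $[n]$ into $\omega$ nonempty blocks.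
   Context: Let $A=\{a_1,\dots,a_m\}$ with $a_1>\dots>a_m>0$. For a finite nonempty set $S$, $\mathcal{C}^*_{S,A}$ is the arrangement in $\mathbb{R}^S$ of hyperplanes $x_i-x_j=a_k$ ($i\ne j\in S$, $1\le k\le m$), and $\mathcal{C}^*_{n,A}=\mathcal{C}^*_{[n],A}$; for $|S|=1$ it is empty with unique region $\mathbb{R}^S$ of level 1. Regions are connected components of the complement; $\mathcal{R}_1(\cdot)$ denotes the set of regions of level 1. The level of $X\subseteq\mathbb{R}^S$ is the smallest integer $\ell\ge0$ such that there are a linear subspace $W$ of dimension $\ell$ and $r>0$ with $X\subseteq\{\bm x:\min_{\bm y\in W}\|\bm x-\bm y\|\le r\}$. $G_1(\Omega)$ is the graph on $[n]$ with $\{i,j\}$ an edge iff $|x_i-x_j|<a_1$ for $\bm x\in\Omega$. *)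

theory Defs
  imports "HOL-Analysis.Analysis"
begin

text \<open>Points of R^S (S a finite set of nat indices) are functions nat => real vanishing
outside S. The topology is the product topology on nat => real (Function_Topology),
which on this finite-dimensional coordinate subspace is the Euclidean topology.\<close>

definition carrierS :: "nat set \<Rightarrow> (nat \<Rightarrow> real) set" where
  "carrierS S = {x. \<forall>i. i \<notin> S \<longrightarrow> x i = 0}"

definition cmpl :: "real set \<Rightarrow> nat set \<Rightarrow> (nat \<Rightarrow> real) set" where
  "cmpl A S = {x \<in> carrierS S. \<forall>i\<in>S. \<forall>j\<in>S. \<forall>a\<in>A. i \<noteq> j \<longrightarrow> x i - x j \<noteq> a}"

definition regions :: "real set \<Rightarrow> nat set \<Rightarrow> (nat \<Rightarrow> real) set set" where
  "regions A S = {connected_component_set (cmpl A S) x | x. x \<in> cmpl A S}"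

definition distS :: "nat set \<Rightarrow> (nat \<Rightarrow> real) \<Rightarrow> (nat \<Rightarrow> real) \<Rightarrow> real" where
  "distS S x y = sqrt (\<Sum>i\<in>S. (x i - y i)^2)"

text \<open>Level: least l such that X lies within bounded distance of a linear subspace W of R^S
of dimension l; W is written as the span of l linearly independent vectors v 0,...,v (l-1)
of R^S. Since W is closed, "min over y in W of dist <= r" is "some y in W has dist <= r".\<close>
definition level :: "nat set \<Rightarrow> (nat \<Rightarrow> real) set \<Rightarrow> nat" where
  "level S X = (LEAST l. \<exists>v :: nat \<Rightarrow> nat \<Rightarrow> real.
      (\<forall>k<l. v k \<in> carrierS S) \<and>
      (\<forall>c :: nat \<Rightarrow> real. (\<forall>i\<in>S. (\<Sum>k<l. c k * v k i) = 0) \<longrightarrow> (\<forall>k<l. c k = 0)) \<and>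
      (\<exists>r>0. \<forall>x\<in>X. \<exists>c :: nat \<Rightarrow> real. distS S x (\<lambda>i. \<Sum>k<l. c k * v k i) \<le> r))"

definition regions_level :: "real set \<Rightarrow> nat set \<Rightarrow> nat \<Rightarrow> (nat \<Rightarrow> real) set set" where
  "regions_level A S l = {R \<in> regions A S. level S R = l}"

definition a1 :: "real set \<Rightarrow> real" where
  "a1 A = Max A"

definition G1_edge :: "real set \<Rightarrow> nat \<Rightarrow> (nat \<Rightarrow> real) set \<Rightarrow> nat \<Rightarrow> nat \<Rightarrow> bool" where
  "G1_edge A n \<Omega> i j \<longleftrightarrow> i \<in> {1..n} \<and> j \<in> {1..n} \<and> i \<noteq> j \<and>
      (\<forall>x\<in>\<Omega>. \<bar>x i - x j\<bar> < a1 A)"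

definition G1_components :: "real set \<Rightarrow> nat \<Rightarrow> (nat \<Rightarrow> real) set \<Rightarrow> nat set set" where
  "G1_components A n \<Omega> = {{j \<in> {1..n}. (G1_edge A n \<Omega>)\<^sup>*\<^sup>* i j} | i. i \<in> {1..n}}"

definition good_order :: "real set \<Rightarrow> nat \<Rightarrow> (nat \<Rightarrow> real) set \<Rightarrow> nat set list \<Rightarrow> bool" where
  "good_order A n \<Omega> Ds \<longleftrightarrow> set Ds = G1_components A n \<Omega> \<and> distinct Ds \<and>
     (\<forall>u v. u < v \<and> v < length Ds \<longrightarrow>
        (\<forall>i\<in>Ds!u. \<forall>j\<in>Ds!v. \<forall>x\<in>\<Omega>. x j - x i > a1 A))"

definition restr :: "(nat \<Rightarrow> real) \<Rightarrow> nat set \<Rightarrow> nat \<Rightarrow> real" where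
  "restr x D = (\<lambda>i. if i \<in> D then x i else 0)"

definition phi :: "real set \<Rightarrow> nat \<Rightarrow> (nat \<Rightarrow> real) set \<Rightarrow> nat set list \<times> (nat \<Rightarrow> real) set list" where
  "phi A n \<Omega> = (let Ds = (THE Ds. good_order A n \<Omega> Ds); x = (SOME x. x \<in> \<Omega>) in
      (Ds, map (\<lambda>D. connected_component_set (cmpl A D) (restr x D)) Ds))"

definition ordered_partition :: "nat \<Rightarrow> nat \<Rightarrow> nat set list \<Rightarrow> bool" where
  "ordered_partition n \<omega> Ds \<longleftrightarrow> length Ds = \<omega> \<and> (\<forall>j<\<omega>. Ds!j \<noteq> {}) \<and>
     (\<forall>u<\<omega>. \<forall>v<\<omega>. u \<noteq> v \<longrightarrow> Ds!u \<inter> Ds!v = {}) \<and> \<Union>(set Ds) = {1..n}"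

definition target :: "real set \<Rightarrow> nat \<Rightarrow> nat \<Rightarrow> (nat set list \<times> (nat \<Rightarrow> real) set list) set" where
  "target A n \<omega> = {(Ds, Rs). ordered_partition n \<omega> Ds \<and> length Rs = \<omega> \<and>
      (\<forall>j<\<omega>. Rs!j \<in> regions_level A (Ds!j) 1)}"

end

theory Submission
  imports Defs
begin


definition same_cell :: "real set \<Rightarrow> nat set \<Rightarrow> (nat\<Rightarrow>real) \<Rightarrow> (nat\<Rightarrow>real) \<Rightarrow> bool" where
 "same_cell A S x y \<longleftrightarrow> (\<forall>i\<in>S. \<forall>j\<in>S. \<forall>a\<in>A. i \<noteq> j \<longrightarrow> (x i - x j < a \<longleftrightarrow> y i - y j < a))"

definition cell :: "real set \<Rightarrow> nat set \<Rightarrow> (nat\<Rightarrow>real) \<Rightarrow> (nat\<Rightarrow>real) set" where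
 "cell A S x = {y \<in> cmpl A S. same_cell A S x y}"

lemma conv_less: "(d1::real) < a \<Longrightarrow> d2 < a \<Longrightarrow> 0 \<le> t \<Longrightarrow> t \<le> 1 \<Longrightarrow> (1-t)*d1 + t*d2 < a"
proof (cases "t = 0")
  case False
  assume h: "d1 < a" "d2 < a" "0 \<le> t" "t \<le> 1"
  then have "t*d2 < t*a" using False by simp
  moreover have "(1-t)*d1 \<le> (1-t)*a" using h by (intro mult_left_mono) auto
  ultimately show ?thesis by (simp add: algebra_simps)
qed simp

lemma conv_gr: "(d1::real) > a \<Longrightarrow> d2 > a \<Longrightarrow> 0 \<le> t \<Longrightarrow> t \<le> 1 \<Longrightarrow> (1-t)*d1 + t*d2 > a"
  using conv_less[of "-d1" "-a" "-d2" t] by (simp add: algebra_simps)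

lemma cell_path_connected: "path_connected (cell A S x)"
  unfolding path_connected_def
proof (intro ballI)
  fix y z assume y: "y \<in> cell A S x" and z: "z \<in> cell A S x"
  define g where "g = (\<lambda>t::real. (\<lambda>i. (1-t) * y i + t * z i))"
  have "path g" unfolding path_def g_def
    by (intro continuous_on_coordinatewise_then_product continuous_intros)
  moreover have "path_image g \<subseteq> cell A S x"
  proof
    fix w assume "w \<in> path_image g"
    then obtain t where t: "0 \<le> t" "t \<le> 1" and w: "w = g t" unfolding path_image_def by auto
    have wc: "w \<in> carrierS S" using y z unfolding w g_def cell_def cmpl_def carrierS_def by auto
    have key: "(w i - w j < a \<longleftrightarrow> x i - x j < a) \<and> w i - w j \<noteq> a"
      if "i \<in> S" "j \<in> S" "a \<in> A" "i \<noteq> j" for i j a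
    proof -
      have e: "w i - w j = (1-t) * (y i - y j) + t * (z i - z j)" unfolding w g_def by (simp add: algebra_simps)
      have yy: "y i - y j \<noteq> a" "z i - z j \<noteq> a" using y z that unfolding cell_def cmpl_def by auto
      have yx: "y i - y j < a \<longleftrightarrow> x i - x j < a" "z i - z j < a \<longleftrightarrow> x i - x j < a"
        using y z that unfolding cell_def same_cell_def by auto
      show ?thesis
      proof (cases "x i - x j < a")
        case True
        then show ?thesis using conv_less[of "y i - y j" a "z i - z j" t] yx t e by auto
      next
        case False
        then have "y i - y j > a" "z i - z j > a" using yx yy by auto
        then show ?thesis using conv_gr[of a "y i - y j" "z i - z j" t] False t e by auto
      qed
    qed
    show "w \<in> cell A S x" unfolding cell_def cmpl_def same_cell_def using wc key by auto
  qed
  moreover have "pathstart g = y" "pathfinish g = z" unfolding pathstart_def pathfinish_def g_def by auto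
  ultimately show "\<exists>g. path g \<and> path_image g \<subseteq> cell A S x \<and> pathstart g = y \<and> pathfinish g = z" by blast
qed

lemma open_diff_less: "open {y::nat\<Rightarrow>real. y i - y j < a}"
  by (rule open_Collect_less) (intro continuous_intros continuous_on_product_coordinates)+

lemma open_diff_gr: "open {y::nat\<Rightarrow>real. y i - y j > a}"
  by (rule open_Collect_less) (intro continuous_intros continuous_on_product_coordinates)+

lemma cell_in_cc:
  assumes "x \<in> cmpl A S" "finite S" "finite A"
  shows "connected_component_set (cmpl A S) x = cell A S x"
proof
  have xc: "x \<in> cell A S x" using assms unfolding cell_def same_cell_def by auto
  show "cell A S x \<subseteq> connected_component_set (cmpl A S) x"
    by (rule connected_component_maximal[OF xc path_connected_imp_connected[OF cell_path_connected]])
       (auto simp: cell_def)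
  define P where "P = (\<lambda>(p::nat\<times>nat\<times>real). case p of (i,j,a) \<Rightarrow>
      (if i = j then UNIV else if x i - x j < a then {y::nat\<Rightarrow>real. y i - y j < a} else {y. y i - y j > a}))"
  define Q where "Q = (\<lambda>(p::nat\<times>nat\<times>real). case p of (i,j,a) \<Rightarrow>
      (if i = j then {} else if x i - x j < a then {y::nat\<Rightarrow>real. y i - y j > a} else {y. y i - y j < a}))"
  define O1 where "O1 = (\<Inter>p\<in>S\<times>S\<times>A. P p)"
  define O2 where "O2 = (\<Union>p\<in>S\<times>S\<times>A. Q p)"
  have oP: "open (P p)" for p unfolding P_def by (auto split: prod.splits simp: open_diff_less open_diff_gr)
  have oQ: "open (Q p)" for p unfolding Q_def by (auto split: prod.splits simp: open_diff_less open_diff_gr)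
  have o1: "open O1" unfolding O1_def using oP assms by auto
  have o2: "open O2" unfolding O2_def using oQ by auto
  have ne: "y i - y j \<noteq> a" if "y \<in> cmpl A S" "i \<in> S" "j \<in> S" "a \<in> A" "i \<noteq> j" for y i j a
    using that unfolding cmpl_def by auto
  have e1: "cmpl A S \<inter> O1 = cell A S x"
  proof (rule set_eqI, rule iffI)
    fix y assume "y \<in> cmpl A S \<inter> O1"
    then have yc: "y \<in> cmpl A S" and h: "\<And>i j a. i \<in> S \<Longrightarrow> j \<in> S \<Longrightarrow> a \<in> A \<Longrightarrow> y \<in> P (i,j,a)"
      unfolding O1_def by auto
    have "(x i - x j < a \<longleftrightarrow> y i - y j < a)" if "i \<in> S" "j \<in> S" "a \<in> A" "i \<noteq> j" for i j a
      using h[OF that(1-3)] that(4) unfolding P_def by (auto split: if_splits)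
    then show "y \<in> cell A S x" using yc unfolding cell_def same_cell_def by auto
  next
    fix y assume y: "y \<in> cell A S x"
    then have yc: "y \<in> cmpl A S" unfolding cell_def by auto
    have "y \<in> P (i,j,a)" if "i \<in> S" "j \<in> S" "a \<in> A" for i j a
      using y ne[OF yc that(1,2,3)] that unfolding P_def cell_def same_cell_def by auto
    then show "y \<in> cmpl A S \<inter> O1" using yc unfolding O1_def by auto
  qed
  have e2: "cmpl A S \<inter> O2 = cmpl A S - cell A S x"
  proof (rule set_eqI, rule iffI)
    fix y assume y: "y \<in> cmpl A S \<inter> O2"
    then obtain i j a where ija: "i \<in> S" "j \<in> S" "a \<in> A" "y \<in> Q (i,j,a)" unfolding O2_def by auto
    then have "i \<noteq> j \<and> \<not> (x i - x j < a \<longleftrightarrow> y i - y j < a)" unfolding Q_def by (auto split: if_splits)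
    then show "y \<in> cmpl A S - cell A S x" using y ija unfolding cell_def same_cell_def
      by blast
  next
    fix y assume y: "y \<in> cmpl A S - cell A S x"
    then obtain i j a where ija: "i \<in> S" "j \<in> S" "a \<in> A" "i \<noteq> j" "\<not> (x i - x j < a \<longleftrightarrow> y i - y j < a)"
      unfolding cell_def same_cell_def by auto
    have "y \<in> Q (i,j,a)" using ija ne[of y i j a] y unfolding Q_def by auto
    then show "y \<in> cmpl A S \<inter> O2" using y ija unfolding O2_def by auto
  qed
  define C where "C = connected_component_set (cmpl A S) x"
  have Csub: "C \<subseteq> cmpl A S" unfolding C_def by (rule connected_component_subset)
  have "connected C" unfolding C_def by (rule connected_connected_component)
  have T1: "C \<inter> cell A S x = C \<inter> O1" using Csub e1 by blast
  have T2: "C - (C \<inter> cell A S x) = C \<inter> O2" using Csub e2 by blast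
  have "openin (top_of_set C) (C \<inter> cell A S x)" unfolding T1 using o1 by auto
  moreover have "closedin (top_of_set C) (C \<inter> cell A S x)"
    unfolding closedin_def using T2 o2 by auto
  moreover have "x \<in> C" unfolding C_def using assms(1) by simp
  ultimately have "C \<inter> cell A S x = C" using \<open>connected C\<close> xc unfolding connected_clopen by blast
  then show "connected_component_set (cmpl A S) x \<subseteq> cell A S x" unfolding C_def by blast
qed




lemma homog_solve:
  fixes a :: "nat \<Rightarrow> nat \<Rightarrow> real"
  shows "finite U \<Longrightarrow> card U > l \<Longrightarrow> \<exists>\<beta>. (\<exists>u\<in>U. \<beta> u \<noteq> 0) \<and> (\<forall>m<l. (\<Sum>u\<in>U. a m u * \<beta> u) = 0)"
proof (induction l arbitrary: U a)
  case 0
  then obtain u where "u \<in> U" by (metis card.empty card_gt_0_iff ex_in_conv)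
  then show ?case by (rule_tac x="\<lambda>_. 1" in exI) auto
next
  case (Suc l)
  show ?case
  proof (cases "\<forall>u\<in>U. a l u = 0")
    case True
    obtain \<beta> where b: "(\<exists>u\<in>U. \<beta> u \<noteq> 0)" "(\<forall>m<l. (\<Sum>u\<in>U. a m u * \<beta> u) = 0)"
      using Suc.IH[of U a] Suc.prems by auto
    have "(\<Sum>u\<in>U. a l u * \<beta> u) = 0" using True by simp
    then show ?thesis using b by (metis less_Suc_eq)
  next
    case False
    then obtain p where p: "p \<in> U" "a l p \<noteq> 0" by auto
    define U' where "U' = U - {p}"
    have U': "finite U'" "card U' > l" using Suc.prems p unfolding U'_def by auto
    define b where "b = (\<lambda>m u. a m u - (a l u / a l p) * a m p)"
    obtain \<gamma> where g: "(\<exists>u\<in>U'. \<gamma> u \<noteq> 0)" "(\<forall>m<l. (\<Sum>u\<in>U'. b m u * \<gamma> u) = 0)"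
      using Suc.IH[OF U'] by blast
    define \<beta> where "\<beta> = (\<lambda>u. if u = p then - (\<Sum>u\<in>U'. a l u * \<gamma> u) / a l p else \<gamma> u)"
    have sU: "(\<Sum>u\<in>U. f u) = f p + (\<Sum>u\<in>U'. f u)" for f :: "nat \<Rightarrow> real"
      unfolding U'_def using p Suc.prems(1) by (simp add: sum.remove)
    have bU': "\<And>u. u \<in> U' \<Longrightarrow> \<beta> u = \<gamma> u" unfolding \<beta>_def U'_def by auto
    have "(\<Sum>u\<in>U. a m u * \<beta> u) = 0" if "m < Suc l" for m
    proof -
      have "(\<Sum>u\<in>U. a m u * \<beta> u) = a m p * \<beta> p + (\<Sum>u\<in>U'. a m u * \<gamma> u)"
        using sU bU' by simp
      also have "(\<Sum>u\<in>U'. a m u * \<gamma> u) = (\<Sum>u\<in>U'. b m u * \<gamma> u) + (a m p / a l p) * (\<Sum>u\<in>U'. a l u * \<gamma> u)"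
        unfolding b_def by (simp add: sum_distrib_left sum.distrib[symmetric] algebra_simps)
      finally have e: "(\<Sum>u\<in>U. a m u * \<beta> u) = a m p * \<beta> p + (\<Sum>u\<in>U'. b m u * \<gamma> u) + (a m p / a l p) * (\<Sum>u\<in>U'. a l u * \<gamma> u)"
        by simp
      have bp: "a m p * \<beta> p = - (a m p / a l p) * (\<Sum>u\<in>U'. a l u * \<gamma> u)"
        unfolding \<beta>_def by simp
      show ?thesis
      proof (cases "m = l")
        case True
        have "a l p * \<beta> p = - (\<Sum>u\<in>U'. a l u * \<gamma> u)" unfolding \<beta>_def using p by simp
        then show ?thesis using sU bU' True by simp
      next
        case False
        then have "m < l" using that by simp
        then show ?thesis using e bp g(2) by simp
      qed
    qed
    moreover have "\<exists>u\<in>U. \<beta> u \<noteq> 0"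
    proof -
      obtain u where "u \<in> U'" "\<gamma> u \<noteq> 0" using g(1) by blast
      then show ?thesis using bU'[of u] unfolding U'_def by (intro bexI[of _ u]) auto
    qed
    ultimately show ?thesis by blast
  qed
qed

lemma sum_upto_if:
  fixes \<beta> :: "nat \<Rightarrow> real"
  assumes "b < k"
  shows "(\<Sum>u<k. \<beta> u * (if u \<le> b then 1 else 0)) = (\<Sum>u\<le>b. \<beta> u)"
proof -
  have "(\<Sum>u<k. \<beta> u * (if u \<le> b then 1 else 0)) = (\<Sum>u\<in>{..<k}. if u \<in> {..b} then \<beta> u else 0)"
    by (intro sum.cong) auto
  also have "\<dots> = (\<Sum>u\<in>{..<k} \<inter> {..b}. \<beta> u)" by (simp add: sum.inter_restrict)
  also have "{..<k} \<inter> {..b} = {..b}" using assms by auto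
  finally show ?thesis .
qed

lemma partial_sums_zero:
  fixes \<beta> :: "nat \<Rightarrow> real"
  assumes "\<forall>b<k. (\<Sum>u\<le>b. \<beta> u) = 0"
  shows "\<forall>b<k. \<beta> b = 0"
proof (intro allI impI)
  fix b assume "b < k"
  then show "\<beta> b = 0"
  proof (cases b)
    case 0 then show ?thesis using assms \<open>b<k\<close> by auto
  next
    case (Suc c)
    have "(\<Sum>u\<le>Suc c. \<beta> u) = 0" "(\<Sum>u\<le>c. \<beta> u) = 0"
      using assms[rule_format, of "Suc c"] assms[rule_format, of c] \<open>b<k\<close> Suc by auto
    then show ?thesis using Suc by simp
  qed
qed

lemma level_eq:
  fixes S :: "nat set" and R :: "(nat \<Rightarrow> real) set" and blk :: "nat \<Rightarrow> nat" and k :: nat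
    and x0 :: "nat \<Rightarrow> real" and B :: real
  assumes fin: "finite S"
    and blk: "blk ` S = {..<k}"
    and bound: "\<forall>x\<in>R. \<forall>i\<in>S. \<forall>j\<in>S. blk i = blk j \<longrightarrow> \<bar>x i - x j\<bar> \<le> B"
    and cone: "\<forall>t. (\<forall>u. t u \<ge> 0) \<longrightarrow> (\<lambda>i. if i\<in>S then x0 i + (\<Sum>u\<le>blk i. t u) else 0) \<in> R"
  shows "level S R = k"
  unfolding level_def
proof (rule Least_equality)
  have blkk: "blk i < k" if "i \<in> S" for i using blk that by auto
  have rep: "\<exists>i\<in>S. blk i = u" if "u < k" for u using blk that by (metis imageE lessThan_iff)
  define v where "v = (\<lambda>u i. if i \<in> S \<and> blk i = u then 1 else (0::real))"
  have vsum: "(\<Sum>u<k. c u * v u i) = c (blk i)" if "i \<in> S" for c i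
  proof -
    have "(\<Sum>u<k. c u * v u i) = (\<Sum>u<k. if blk i = u then c (blk i) else 0)"
      unfolding v_def using that by (intro sum.cong) auto
    also have "\<dots> = c (blk i)" using blkk[OF that] by simp
    finally show ?thesis .
  qed
  show "\<exists>v. (\<forall>ka<k. v ka \<in> carrierS S) \<and>
        (\<forall>c. (\<forall>i\<in>S. (\<Sum>ka<k. c ka * v ka i) = 0) \<longrightarrow> (\<forall>ka<k. c ka = 0)) \<and>
        (\<exists>r>0. \<forall>x\<in>R. \<exists>c. distS S x (\<lambda>i. \<Sum>ka<k. c ka * v ka i) \<le> r)"
  proof (intro exI[of _ v] conjI allI impI)
    show "v u \<in> carrierS S" for u unfolding v_def carrierS_def by auto
  next
    fix c u assume h: "\<forall>i\<in>S. (\<Sum>ka<k. c ka * v ka i) = 0" and "u < k"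
    then obtain i where "i \<in> S" "blk i = u" using rep by blast
    then show "c u = 0" using h vsum by force
  next
    define r where "r = sqrt (real (card S) * B\<^sup>2) + 1"
    have r0: "r > 0" unfolding r_def by (simp add: add_nonneg_pos)
    have "\<exists>c. distS S x (\<lambda>i. \<Sum>ka<k. c ka * v ka i) \<le> r" if x: "x \<in> R" for x
    proof -
      define rp where "rp = (\<lambda>u. SOME i. i \<in> S \<and> blk i = u)"
      have rp: "rp u \<in> S \<and> blk (rp u) = u" if "u < k" for u
        unfolding rp_def using rep[OF that] by (metis (mono_tags, lifting) someI_ex)
      define c where "c = (\<lambda>u. x (rp u))"
      have "distS S x (\<lambda>i. \<Sum>ka<k. c ka * v ka i) = sqrt (\<Sum>i\<in>S. (x i - x (rp (blk i)))\<^sup>2)"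
        unfolding distS_def using vsum c_def by (intro arg_cong[where f=sqrt] sum.cong) auto
      also have "\<dots> \<le> sqrt (\<Sum>i\<in>S. B\<^sup>2)"
      proof (intro real_sqrt_le_mono sum_mono)
        fix i assume i: "i \<in> S"
        have "\<bar>x i - x (rp (blk i))\<bar> \<le> B" using bound x i rp[OF blkk[OF i]] by auto
        then have "\<bar>x i - x (rp (blk i))\<bar>\<^sup>2 \<le> B\<^sup>2" by (intro power_mono) auto
        then show "(x i - x (rp (blk i)))\<^sup>2 \<le> B\<^sup>2" by simp
      qed
      also have "\<dots> \<le> r" unfolding r_def by simp
      finally show ?thesis by blast
    qed
    then show "\<exists>r>0. \<forall>x\<in>R. \<exists>c. distS S x (\<lambda>i. \<Sum>ka<k. c ka * v ka i) \<le> r" using r0 by blast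
  qed
next
  fix l :: nat
  assume "\<exists>v. (\<forall>ka<l. v ka \<in> carrierS S) \<and>
        (\<forall>c. (\<forall>i\<in>S. (\<Sum>ka<l. c ka * v ka i) = 0) \<longrightarrow> (\<forall>ka<l. c ka = 0)) \<and>
        (\<exists>r>0. \<forall>x\<in>R. \<exists>c. distS S x (\<lambda>i. \<Sum>ka<l. c ka * v ka i) \<le> r)"
  then obtain v r where r0: "r > 0" and near: "\<forall>x\<in>R. \<exists>c. distS S x (\<lambda>i. \<Sum>ka<l. c ka * v ka i) \<le> r"
    by blast
  have blkk: "blk i < k" if "i \<in> S" for i using blk that by auto
  have rep: "\<exists>i\<in>S. blk i = u" if "u < k" for u using blk that by (metis imageE lessThan_iff)
  show "k \<le> l"
  proof (rule ccontr)
    assume "\<not> k \<le> l"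
    then have lk: "l < k" by simp
    define w where "w = (\<lambda>u i. if u \<le> blk i then 1 else (0::real))"
    define a where "a = (\<lambda>m u. \<Sum>i\<in>S. w u i * v m i)"
    obtain \<beta> where b1: "\<exists>u\<in>{..<k}. \<beta> u \<noteq> 0" and b2: "\<forall>m<l. (\<Sum>u\<in>{..<k}. a m u * \<beta> u) = 0"
      using homog_solve[of "{..<k}" l a] lk by auto
    define z where "z = (\<lambda>i. \<Sum>u\<le>blk i. \<beta> u)"
    have zw: "z i = (\<Sum>u<k. \<beta> u * w u i)" if "i \<in> S" for i
      unfolding z_def w_def using sum_upto_if[OF blkk[OF that]] by simp
    have orth: "(\<Sum>i\<in>S. z i * v m i) = 0" if "m < l" for m
    proof -
      have "(\<Sum>i\<in>S. z i * v m i) = (\<Sum>i\<in>S. \<Sum>u<k. \<beta> u * w u i * v m i)"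
        using zw by (simp add: sum_distrib_right)
      also have "\<dots> = (\<Sum>u<k. \<Sum>i\<in>S. \<beta> u * w u i * v m i)" by (rule sum.swap)
      also have "\<dots> = (\<Sum>u<k. a m u * \<beta> u)" unfolding a_def
        by (simp add: sum_distrib_left mult.assoc mult.commute mult.left_commute)
      finally show ?thesis using b2 that by simp
    qed
    have orth2: "(\<Sum>i\<in>S. z i * (\<Sum>m<l. c m * v m i)) = 0" for c
    proof -
      have "(\<Sum>i\<in>S. z i * (\<Sum>m<l. c m * v m i)) = (\<Sum>m<l. c m * (\<Sum>i\<in>S. z i * v m i))"
        by (simp add: sum_distrib_left sum.swap[of _ S] mult.assoc mult.commute mult.left_commute)
      then show ?thesis using orth by simp
    qed
    have znz: "\<exists>i\<in>S. z i \<noteq> 0"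
    proof (rule ccontr)
      assume "\<not> (\<exists>i\<in>S. z i \<noteq> 0)"
      then have "\<forall>b<k. (\<Sum>u\<le>b. \<beta> u) = 0" using rep unfolding z_def by metis
      then have "\<forall>b<k. \<beta> b = 0" by (rule partial_sums_zero)
      then show False using b1 by auto
    qed
    define N where "N = (\<Sum>i\<in>S. (z i)\<^sup>2)"
    have N0: "N > 0" using znz fin unfolding N_def
      by (metis sum_pos2 zero_less_power2 zero_le_power2)
    have bnd: "\<bar>\<Sum>i\<in>S. y i * z i\<bar> \<le> r * sqrt N" if y: "y \<in> R" for y
    proof -
      obtain c where c: "distS S y (\<lambda>i. \<Sum>ka<l. c ka * v ka i) \<le> r" using near y by blast
      define p where "p = (\<lambda>i. \<Sum>ka<l. c ka * v ka i)"
      have "(\<Sum>i\<in>S. y i * z i) = (\<Sum>i\<in>S. (y i - p i) * z i) + (\<Sum>i\<in>S. z i * p i)"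
        by (simp add: sum.distrib[symmetric] algebra_simps)
      also have "(\<Sum>i\<in>S. z i * p i) = 0" unfolding p_def by (rule orth2)
      finally have e: "(\<Sum>i\<in>S. y i * z i) = (\<Sum>i\<in>S. (y i - p i) * z i)" by simp
      have "\<bar>\<Sum>i\<in>S. (y i - p i) * z i\<bar> \<le> (\<Sum>i\<in>S. \<bar>y i - p i\<bar> * \<bar>z i\<bar>)"
        by (rule order_trans[OF sum_abs]) (simp add: abs_mult)
      also have "\<dots> \<le> L2_set (\<lambda>i. y i - p i) S * L2_set z S" by (rule L2_set_mult_ineq)
      also have "L2_set (\<lambda>i. y i - p i) S = distS S y p" unfolding L2_set_def distS_def by simp
      also have "L2_set z S = sqrt N" unfolding L2_set_def N_def by simp
      also have "distS S y p * sqrt N \<le> r * sqrt N" using c N0 unfolding p_def by (intro mult_right_mono) auto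
      finally show ?thesis using e by simp
    qed
    define M where "M = 2 * r / sqrt N + 1"
    have M0: "M > 0" unfolding M_def using r0 N0 by (simp add: add_nonneg_pos)
    define tp where "tp = (\<lambda>u. M * max (\<beta> u) 0)"
    define tm where "tm = (\<lambda>u. M * max (- \<beta> u) 0)"
    define yp where "yp = (\<lambda>i. if i\<in>S then x0 i + (\<Sum>u\<le>blk i. tp u) else 0)"
    define ym where "ym = (\<lambda>i. if i\<in>S then x0 i + (\<Sum>u\<le>blk i. tm u) else 0)"
    have ypR: "yp \<in> R" unfolding yp_def using cone M0 unfolding tp_def by auto
    have ymR: "ym \<in> R" unfolding ym_def using cone M0 unfolding tm_def by auto
    have dif: "yp i - ym i = M * z i" if "i \<in> S" for i
    proof -
      have "yp i - ym i = (\<Sum>u\<le>blk i. tp u - tm u)" unfolding yp_def ym_def using that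
        by (simp add: sum_subtractf)
      also have "\<dots> = (\<Sum>u\<le>blk i. M * \<beta> u)" unfolding tp_def tm_def
        by (intro sum.cong) (auto simp: max_def algebra_simps)
      finally show ?thesis unfolding z_def by (simp add: sum_distrib_left)
    qed
    have "(\<Sum>i\<in>S. yp i * z i) - (\<Sum>i\<in>S. ym i * z i) = (\<Sum>i\<in>S. (yp i - ym i) * z i)"
      by (simp add: sum_subtractf left_diff_distrib)
    also have "\<dots> = (\<Sum>i\<in>S. M * (z i)\<^sup>2)" using dif by (intro sum.cong) (auto simp: power2_eq_square)
    also have "\<dots> = M * N" unfolding N_def by (simp add: sum_distrib_left)
    finally have MN: "M * N = (\<Sum>i\<in>S. yp i * z i) - (\<Sum>i\<in>S. ym i * z i)" by simp
    have "M * N \<le> 2 * r * sqrt N" using bnd[OF ypR] bnd[OF ymR] MN by linarith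
    moreover have "N = sqrt N * sqrt N" using N0 by simp
    ultimately have "M * sqrt N * sqrt N \<le> (2 * r) * sqrt N" by (simp add: mult.assoc)
    then have "M * sqrt N \<le> 2 * r" using N0 by simp
    then have "M \<le> 2 * r / sqrt N" using N0 by (simp add: field_simps)
    then show False unfolding M_def by simp
  qed
qed




definition edge :: "real set \<Rightarrow> nat set \<Rightarrow> (nat\<Rightarrow>real) \<Rightarrow> nat \<Rightarrow> nat \<Rightarrow> bool" where
  "edge A S x i j \<longleftrightarrow> i \<in> S \<and> j \<in> S \<and> i \<noteq> j \<and> \<bar>x i - x j\<bar> < a1 A"

abbreviation conn where "conn A S x \<equiv> (edge A S x)\<^sup>*\<^sup>*"

definition comp :: "real set \<Rightarrow> nat set \<Rightarrow> (nat\<Rightarrow>real) \<Rightarrow> nat \<Rightarrow> nat set" where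
  "comp A S x i = {j \<in> S. conn A S x i j}"

definition comps :: "real set \<Rightarrow> nat set \<Rightarrow> (nat\<Rightarrow>real) \<Rightarrow> nat set set" where
  "comps A S x = comp A S x ` S"

definition lt :: "real set \<Rightarrow> (nat\<Rightarrow>real) \<Rightarrow> nat set \<Rightarrow> nat set \<Rightarrow> bool" where
  "lt A x C C' \<longleftrightarrow> (\<forall>i\<in>C. \<forall>j\<in>C'. x j - x i > a1 A)"

definition keyC :: "(nat\<Rightarrow>real) \<Rightarrow> nat set \<Rightarrow> real" where
  "keyC x C = Min (x ` C)"

locale arr =
  fixes A :: "real set"
  assumes finA: "finite A" and neA: "A \<noteq> {}" and posA: "\<forall>a\<in>A. a > 0"
begin

lemma a1_in: "a1 A \<in> A" unfolding a1_def using finA neA by simp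
lemma a1_pos: "a1 A > 0" using a1_in posA by auto
lemma a1_ge: "a \<in> A \<Longrightarrow> a \<le> a1 A" unfolding a1_def using finA by simp

lemma same_cell_sym: "same_cell A S x y \<Longrightarrow> same_cell A S y x"
  unfolding same_cell_def by auto
lemma same_cell_trans: "same_cell A S x y \<Longrightarrow> same_cell A S y z \<Longrightarrow> same_cell A S x z"
  unfolding same_cell_def by auto
lemma same_cell_refl: "same_cell A S x x"
  unfolding same_cell_def by auto

lemma cell_eq: "same_cell A S x y \<Longrightarrow> cell A S x = cell A S y"
  unfolding cell_def using same_cell_sym same_cell_trans by blast

lemma cell_eq': "y \<in> cell A S x \<Longrightarrow> cell A S y = cell A S x"
  using cell_eq same_cell_sym unfolding cell_def by blast

lemma self_in_cell: "x \<in> cmpl A S \<Longrightarrow> x \<in> cell A S x"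
  unfolding cell_def using same_cell_refl by auto

lemma cmpl_ne: "x \<in> cmpl A S \<Longrightarrow> i \<in> S \<Longrightarrow> j \<in> S \<Longrightarrow> i \<noteq> j \<Longrightarrow> a \<in> A \<Longrightarrow> x i - x j \<noteq> a"
  unfolding cmpl_def by auto

lemma same_cell_gt:
  assumes "same_cell A S x y" "x \<in> cmpl A S" "y \<in> cmpl A S" "i \<in> S" "j \<in> S" "i \<noteq> j" "a \<in> A"
  shows "x i - x j > a \<longleftrightarrow> y i - y j > a"
proof -
  have "x i - x j < a \<longleftrightarrow> y i - y j < a" using assms unfolding same_cell_def by auto
  moreover have "x i - x j \<noteq> a" "y i - y j \<noteq> a" using assms cmpl_ne by auto
  ultimately show ?thesis by linarith
qed

lemma edge_cell: assumes "y \<in> cell A S x" "x \<in> cmpl A S" shows "edge A S y = edge A S x"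
proof (intro ext)
  fix i j
  have "\<bar>y i - y j\<bar> < a1 A \<longleftrightarrow> \<bar>x i - x j\<bar> < a1 A" if "i \<in> S" "j \<in> S" "i \<noteq> j"
  proof -
    have "y i - y j < a1 A \<longleftrightarrow> x i - x j < a1 A" "y j - y i < a1 A \<longleftrightarrow> x j - x i < a1 A"
      using assms that a1_in unfolding cell_def same_cell_def by auto
    then show ?thesis by (auto simp: abs_less_iff)
  qed
  then show "edge A S y i j = edge A S x i j" unfolding edge_def by auto
qed

lemma edge_sym: "edge A S x i j \<Longrightarrow> edge A S x j i"
  unfolding edge_def by auto

lemma conn_sym: "conn A S x i j \<Longrightarrow> conn A S x j i"
proof (induction rule: rtranclp_induct)
  case base then show ?case by simp
next
  case (step y z)
  then show ?case using edge_sym by (metis converse_rtranclp_into_rtranclp)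
qed

lemma conn_S: "conn A S x i j \<Longrightarrow> i \<in> S \<Longrightarrow> j \<in> S"
  by (induction rule: rtranclp_induct) (auto simp: edge_def)

lemma separated:
  assumes x: "x \<in> cmpl A S" and "i \<in> S" "j \<in> S" "\<not> conn A S x i j"
  shows "x j - x i > a1 A \<or> x i - x j > a1 A"
proof -
  have ij: "i \<noteq> j" using assms by auto
  have "\<not> edge A S x i j" using assms by auto
  then have "\<bar>x i - x j\<bar> \<ge> a1 A" using assms ij unfolding edge_def by auto
  moreover have "x i - x j \<noteq> a1 A" "x j - x i \<noteq> a1 A" using cmpl_ne[OF x] assms ij a1_in by auto
  ultimately show ?thesis by linarith
qed

lemma sign_prop:
  assumes x: "x \<in> cmpl A S" and c: "conn A S x i i'" and i: "i \<in> S" and j: "j \<in> S"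
    and nc: "\<not> conn A S x i j"
  shows "(x j - x i > a1 A \<longrightarrow> x j - x i' > a1 A) \<and> (x i - x j > a1 A \<longrightarrow> x i' - x j > a1 A)"
  using c
proof (induction rule: rtranclp_induct)
  case base then show ?case by simp
next
  case (step y z)
  have zS: "z \<in> S" using step(2) unfolding edge_def by auto
  have ncz: "\<not> conn A S x z j"
    using nc step(1,2) by (meson rtranclp.rtrancl_into_rtrancl rtranclp_trans)
  have e: "\<bar>x y - x z\<bar> < a1 A" using step(2) unfolding edge_def by auto
  have "x j - x z > a1 A \<or> x z - x j > a1 A" using separated[OF x zS j ncz] .
  then show ?case using step(3) e by (auto simp: abs_less_iff)
qed

lemma comp_self: "i \<in> S \<Longrightarrow> i \<in> comp A S x i"
  unfolding comp_def by auto

lemma comp_eq: "j \<in> comp A S x i \<Longrightarrow> comp A S x j = comp A S x i"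
  unfolding comp_def using conn_sym by (auto intro: rtranclp_trans) (meson conn_sym rtranclp_trans)

lemma comps_disj: "C \<in> comps A S x \<Longrightarrow> C' \<in> comps A S x \<Longrightarrow> i \<in> C \<Longrightarrow> i \<in> C' \<Longrightarrow> C = C'"
  unfolding comps_def using comp_eq by blast

lemma comps_ne: "C \<in> comps A S x \<Longrightarrow> C \<noteq> {}"
  unfolding comps_def using comp_self by blast

lemma comps_sub: "C \<in> comps A S x \<Longrightarrow> C \<subseteq> S"
  unfolding comps_def comp_def by auto

lemma comps_union: "\<Union>(comps A S x) = S"
  unfolding comps_def comp_def by auto

lemma comps_fin: "finite S \<Longrightarrow> finite (comps A S x)"
  unfolding comps_def by simp

lemma comps_order:
  assumes x: "x \<in> cmpl A S" and C: "C \<in> comps A S x" and C': "C' \<in> comps A S x" and ne: "C \<noteq> C'"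
  shows "lt A x C C' \<or> lt A x C' C"
proof -
  obtain i j where i: "i \<in> S" "C = comp A S x i" and j: "j \<in> S" "C' = comp A S x j"
    using C C' unfolding comps_def by auto
  have nc: "\<not> conn A S x i j" using ne i j comp_eq unfolding comp_def by (metis (mono_tags, lifting) comp_def mem_Collect_eq)
  have ncs: "\<not> conn A S x j i" using nc conn_sym by blast
  have gen: "lt A x (comp A S x p) (comp A S x q)"
    if p: "p \<in> S" and q: "q \<in> S" and npq: "\<not> conn A S x p q" and d: "x q - x p > a1 A" for p q
    unfolding lt_def
  proof (intro ballI)
    fix p' q' assume p': "p' \<in> comp A S x p" and q': "q' \<in> comp A S x q"
    have cp: "conn A S x p p'" and p'S: "p' \<in> S" using p' unfolding comp_def by auto
    have cq: "conn A S x q q'" using q' unfolding comp_def by auto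
    have d1: "x q - x p' > a1 A" using sign_prop[OF x cp p q npq] d by auto
    have nqp': "\<not> conn A S x q p'"
      using npq cp by (meson conn_sym rtranclp_trans)
    show "x q' - x p' > a1 A" using sign_prop[OF x cq q p'S nqp'] d1 by auto
  qed
  show ?thesis
  proof (cases "x j - x i > a1 A")
    case True then show ?thesis using gen[OF i(1) j(1) nc] i j by auto
  next
    case False
    then have "x i - x j > a1 A" using separated[OF x i(1) j(1) nc] by auto
    then show ?thesis using gen[OF j(1) i(1) ncs] i j by auto
  qed
qed

lemma lt_key:
  assumes "lt A x C C'" "finite C" "finite C'" "C \<noteq> {}" "C' \<noteq> {}"
  shows "keyC x C < keyC x C'"
proof -
  obtain j where j: "j \<in> C'" "keyC x C' = x j" unfolding keyC_def using assms Min_in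
    by (metis (mono_tags, lifting) finite_imageI image_iff image_is_empty)
  obtain i where i: "i \<in> C" using assms by auto
  have "keyC x C \<le> x i" unfolding keyC_def using assms i by simp
  moreover have "x j - x i > a1 A" using assms(1) i j unfolding lt_def by auto
  ultimately show ?thesis using j a1_pos by simp
qed

lemma lt_irrefl: "C \<noteq> {} \<Longrightarrow> \<not> lt A x C C"
  unfolding lt_def using a1_pos by force


definition good :: "nat set \<Rightarrow> (nat\<Rightarrow>real) \<Rightarrow> nat set list \<Rightarrow> bool" where
  "good S x Ds \<longleftrightarrow> set Ds = comps A S x \<and> distinct Ds \<and>
     (\<forall>u v. u < v \<and> v < length Ds \<longrightarrow> lt A x (Ds!u) (Ds!v))"

lemma key_inj:
  assumes "finite S" "x \<in> cmpl A S" shows "inj_on (keyC x) (comps A S x)"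
proof (rule inj_onI)
  fix C C' assume C: "C \<in> comps A S x" and C': "C' \<in> comps A S x" and k: "keyC x C = keyC x C'"
  have f: "finite C" "finite C'" using finite_subset[OF comps_sub[OF C] assms(1)] finite_subset[OF comps_sub[OF C'] assms(1)] by auto
  show "C = C'"
  proof (rule ccontr)
    assume "C \<noteq> C'"
    then have "lt A x C C' \<or> lt A x C' C" using comps_order assms C C' by blast
    then show False using lt_key f comps_ne C C' k by (metis less_irrefl)
  qed
qed

lemma good_keys:
  assumes fin: "finite S" and x: "x \<in> cmpl A S" and g: "good S x Ds"
  shows "map (keyC x) Ds = sorted_list_of_set (keyC x ` comps A S x)"
proof -
  have inj: "inj_on (keyC x) (comps A S x)" using key_inj fin x by blast
  have fC: "finite C" if "C \<in> comps A S x" for C using finite_subset[OF comps_sub[OF that] fin] .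
  have set: "set Ds = comps A S x" and dist: "distinct Ds" using g unfolding good_def by auto
  have "sorted_wrt (<) (map (keyC x) Ds)"
    unfolding sorted_wrt_iff_nth_less
  proof (intro allI impI)
    fix u v assume "u < v" "v < length (map (keyC x) Ds)"
    then have "lt A x (Ds!u) (Ds!v)" "Ds!u \<in> comps A S x" "Ds!v \<in> comps A S x"
      using g set unfolding good_def by auto
    then show "map (keyC x) Ds ! u < map (keyC x) Ds ! v"
      using lt_key fC comps_ne \<open>u<v\<close> \<open>v < _\<close> by auto
  qed
  moreover have "set (map (keyC x) Ds) = keyC x ` comps A S x" using set by simp
  moreover have "length (map (keyC x) Ds) = card (keyC x ` comps A S x)"
    using card_image[OF inj] distinct_card[OF dist] set by simp
  ultimately show ?thesis
    using sorted_list_of_set_unique[of "keyC x ` comps A S x" "map (keyC x) Ds"] comps_fin fin by auto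
qed

lemma good_unique:
  assumes fin: "finite S" and x: "x \<in> cmpl A S" and g1: "good S x Ds1" and g2: "good S x Ds2"
  shows "Ds1 = Ds2"
proof -
  have "map (keyC x) Ds1 = map (keyC x) Ds2" using good_keys[OF fin x] g1 g2 by simp
  moreover have "inj_on (keyC x) (set Ds1 \<union> set Ds2)" using key_inj[OF fin x] g1 g2 unfolding good_def by simp
  ultimately show ?thesis by (rule map_inj_on)
qed

lemma good_exists:
  assumes fin: "finite S" and x: "x \<in> cmpl A S"
  shows "\<exists>Ds. good S x Ds"
proof -
  define K where "K = keyC x ` comps A S x"
  define L where "L = sorted_list_of_set K"
  define iv where "iv = inv_into (comps A S x) (keyC x)"
  define Ds where "Ds = map iv L"
  have inj: "inj_on (keyC x) (comps A S x)" using key_inj fin x by blast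
  have fK: "finite K" unfolding K_def using comps_fin fin by simp
  have fC: "finite C" if "C \<in> comps A S x" for C using finite_subset[OF comps_sub[OF that] fin] .
  have setL: "set L = K" unfolding L_def using fK by simp
  have "set Ds = iv ` K" unfolding Ds_def using setL by simp
  also have "\<dots> = comps A S x" unfolding iv_def K_def using inv_into_image_cancel[OF inj, of "comps A S x"] by simp
  finally have set: "set Ds = comps A S x" .
  have "distinct L" unfolding L_def by simp
  moreover have "inj_on iv (set L)" unfolding iv_def setL K_def by (rule inj_on_inv_into) simp
  ultimately have dist: "distinct Ds" unfolding Ds_def by (simp add: distinct_map)
  have sL: "sorted_wrt (<) L" unfolding L_def by simp
  have ivin: "iv k \<in> comps A S x \<and> keyC x (iv k) = k" if "k \<in> K" for k
    unfolding iv_def using that unfolding K_def by (auto intro: inv_into_into f_inv_into_f)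
  have "lt A x (Ds!u) (Ds!v)" if "u < v" "v < length Ds" for u v
  proof -
    have uv: "L!u < L!v" using sL that unfolding Ds_def by (simp add: sorted_wrt_iff_nth_less)
    have lL: "u < length L" "v < length L" using that unfolding Ds_def by auto
    have inK: "L!u \<in> K" "L!v \<in> K" using nth_mem[OF lL(1)] nth_mem[OF lL(2)] setL by auto
    have e: "Ds!u = iv (L!u)" "Ds!v = iv (L!v)" using that unfolding Ds_def by auto
    have c: "Ds!u \<in> comps A S x" "Ds!v \<in> comps A S x" "keyC x (Ds!u) = L!u" "keyC x (Ds!v) = L!v"
      using ivin inK e by auto
    have "Ds!u \<noteq> Ds!v" using c uv by auto
    then have "lt A x (Ds!u) (Ds!v) \<or> lt A x (Ds!v) (Ds!u)" using comps_order x c by blast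
    moreover have "\<not> lt A x (Ds!v) (Ds!u)" using lt_key[of x "Ds!v" "Ds!u"] c fC comps_ne uv by auto
    ultimately show ?thesis by blast
  qed
  then have "good S x Ds" unfolding good_def using set dist by auto
  then show ?thesis by blast
qed


lemma relpow_bound:
  assumes x: "x \<in> cell A S x0" and x0: "x0 \<in> cmpl A S"
  shows "(edge A S x0 ^^ n) i j \<Longrightarrow> \<bar>x i - x j\<bar> \<le> real n * a1 A"
proof (induction n arbitrary: j)
  case 0 then show ?case by simp
next
  case (Suc n)
  then obtain m where m: "(edge A S x0 ^^ n) i m" "edge A S x0 m j" by auto
  have "edge A S x m j" using m(2) edge_cell[OF x x0] by simp
  then have "\<bar>x m - x j\<bar> < a1 A" unfolding edge_def by auto
  moreover have "\<bar>x i - x m\<bar> \<le> real n * a1 A" using Suc.IH m(1) by simp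
  ultimately show ?case by (simp add: algebra_simps)
qed

lemma cell_level:
  assumes fin: "finite S" and x0: "x0 \<in> cmpl A S" and g: "good S x0 Ds"
  shows "level S (cell A S x0) = length Ds"
proof -
  define k where "k = length Ds"
  define blk where "blk = (\<lambda>i. THE u. u < k \<and> i \<in> Ds!u)"
  have set: "set Ds = comps A S x0" and dist: "distinct Ds" using g unfolding good_def by auto
  have uniq: "u = u'" if "u < k" "u' < k" "i \<in> Ds!u" "i \<in> Ds!u'" for u u' i
  proof -
    have "Ds!u \<in> comps A S x0" "Ds!u' \<in> comps A S x0" using that set unfolding k_def by (metis nth_mem)+
    then have "Ds!u = Ds!u'" using comps_disj that by blast
    then show ?thesis using dist that unfolding k_def by (simp add: nth_eq_iff_index_eq)
  qed
  have ex: "\<exists>u. u < k \<and> i \<in> Ds!u" if "i \<in> S" for i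
  proof -
    have "comp A S x0 i \<in> set Ds" using set that unfolding comps_def by auto
    then obtain u where "u < k" "Ds!u = comp A S x0 i" unfolding k_def by (auto simp: in_set_conv_nth)
    then show ?thesis using comp_self[OF that] by auto
  qed
  have blk_spec: "blk i < k \<and> i \<in> Ds!(blk i)" if "i \<in> S" for i
  proof -
    have "\<exists>!u. u < k \<and> i \<in> Ds!u" using ex[OF that] uniq by blast
    then show ?thesis unfolding blk_def by (rule theI')
  qed
  have blk_eq: "blk i = u" if "i \<in> S" "u < k" "i \<in> Ds!u" for i u
    using blk_spec[OF that(1)] uniq that by blast
  have blk_img: "blk ` S = {..<k}"
  proof
    show "blk ` S \<subseteq> {..<k}" using blk_spec by auto
    show "{..<k} \<subseteq> blk ` S"
    proof
      fix u assume "u \<in> {..<k}"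
      then have u: "u < k" by simp
      then have "Ds!u \<in> comps A S x0" using set unfolding k_def by (metis nth_mem)
      then obtain i where "i \<in> Ds!u" "i \<in> S" using comps_ne comps_sub by blast
      then show "u \<in> blk ` S" using blk_eq u by force
    qed
  qed
  define N where "N = (\<lambda>p. SOME n. (edge A S x0 ^^ n) (fst p) (snd p))"
  define B where "B = (\<Sum>p\<in>S\<times>S. N p) * a1 A"
  have bound: "\<forall>x\<in>cell A S x0. \<forall>i\<in>S. \<forall>j\<in>S. blk i = blk j \<longrightarrow> \<bar>x i - x j\<bar> \<le> B"
  proof (intro ballI impI)
    fix x i j assume x: "x \<in> cell A S x0" and i: "i \<in> S" and j: "j \<in> S" and b: "blk i = blk j"
    have "Ds!(blk i) \<in> comps A S x0" using blk_spec[OF i] set unfolding k_def by (metis nth_mem)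
    moreover have "i \<in> Ds!(blk i)" "j \<in> Ds!(blk i)" using blk_spec[OF i] blk_spec[OF j] b by auto
    ultimately have "j \<in> comp A S x0 i" unfolding comps_def using comp_eq by blast
    then have "conn A S x0 i j" unfolding comp_def by auto
    then have "\<exists>n. (edge A S x0 ^^ n) i j" by (simp add: rtranclp_power)
    then have "(edge A S x0 ^^ N (i,j)) i j" unfolding N_def using someI_ex[of "\<lambda>n. (edge A S x0 ^^ n) i j"] by simp
    then have "\<bar>x i - x j\<bar> \<le> real (N (i,j)) * a1 A" using relpow_bound[OF x x0] by blast
    also have "real (N (i,j)) \<le> real (\<Sum>p\<in>S\<times>S. N p)"
      using i j fin by (intro of_nat_mono member_le_sum) auto
    then have "real (N (i,j)) * a1 A \<le> B" unfolding B_def using a1_pos by (intro mult_right_mono) auto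
    finally show "\<bar>x i - x j\<bar> \<le> B" .
  qed
  have cone: "\<forall>t. (\<forall>u. t u \<ge> 0) \<longrightarrow> (\<lambda>i. if i\<in>S then x0 i + (\<Sum>u\<le>blk i. t u) else 0) \<in> cell A S x0"
  proof (intro allI impI)
    fix t :: "nat \<Rightarrow> real" assume t: "\<forall>u. t u \<ge> 0"
    define y where "y = (\<lambda>i. if i\<in>S then x0 i + (\<Sum>u\<le>blk i. t u) else 0)"
    have mono: "(\<Sum>u\<le>p. t u) \<le> (\<Sum>u\<le>q. t u)" if "p \<le> q" for p q
      using t that by (intro sum_mono2) auto
    have lt_b: "x0 j - x0 i > a1 A" if "i \<in> S" "j \<in> S" "blk i < blk j" for i j
    proof -
      have "lt A x0 (Ds!blk i) (Ds!blk j)" using g that blk_spec unfolding good_def k_def by auto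
      then show ?thesis using blk_spec that unfolding lt_def by auto
    qed
    have cases3: "(y i - y j = x0 i - x0 j) \<or> (y i - y j > a1 A \<and> x0 i - x0 j > a1 A) \<or>
                  (y j - y i > a1 A \<and> x0 j - x0 i > a1 A)" if "i \<in> S" "j \<in> S" for i j
    proof -
      consider "blk i = blk j" | "blk i < blk j" | "blk j < blk i" by linarith
      then show ?thesis
      proof cases
        case 1 then show ?thesis unfolding y_def using that by simp
      next
        case 2
        have "x0 j - x0 i > a1 A" using lt_b that 2 by blast
        moreover have "(\<Sum>u\<le>blk i. t u) \<le> (\<Sum>u\<le>blk j. t u)" using mono 2 by simp
        ultimately show ?thesis unfolding y_def using that by simp
      next
        case 3
        have "x0 i - x0 j > a1 A" using lt_b that 3 by blast
        moreover have "(\<Sum>u\<le>blk j. t u) \<le> (\<Sum>u\<le>blk i. t u)" using mono 3 by simp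
        ultimately show ?thesis unfolding y_def using that by simp
      qed
    qed
    have key: "(x0 i - x0 j < a \<longleftrightarrow> y i - y j < a) \<and> y i - y j \<noteq> a"
      if "i \<in> S" "j \<in> S" "i \<noteq> j" "a \<in> A" for i j a
    proof -
      have "a \<le> a1 A" "a > 0" using a1_ge posA that by auto
      moreover have "x0 i - x0 j \<noteq> a" using cmpl_ne[OF x0] that by auto
      ultimately show ?thesis using cases3[OF that(1,2)] by auto
    qed
    have "y \<in> carrierS S" unfolding y_def carrierS_def by auto
    then show "y \<in> cell A S x0" unfolding y_def[symmetric] cell_def cmpl_def same_cell_def using key by auto
  qed
  show ?thesis unfolding k_def[symmetric]
    by (rule level_eq[OF fin blk_img bound cone])
qed

end



context arr begin

lemma restr_cmpl: assumes "x \<in> cmpl A S" "D \<subseteq> S" shows "restr x D \<in> cmpl A D"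
proof -
  have "restr x D i - restr x D j \<noteq> a" if "i \<in> D" "j \<in> D" "a \<in> A" "i \<noteq> j" for i j a
    using cmpl_ne[OF assms(1), of i j a] that assms(2) unfolding restr_def by auto
  then show ?thesis unfolding cmpl_def carrierS_def by (auto simp: restr_def)
qed

lemma restr_cell: assumes "x \<in> cell A S x0" "D \<subseteq> S" shows "restr x D \<in> cell A D (restr x0 D)"
proof -
  have c: "restr x D \<in> cmpl A D" using assms restr_cmpl unfolding cell_def by auto
  have "same_cell A S x0 x" using assms unfolding cell_def by auto
  then have "same_cell A D (restr x0 D) (restr x D)" using assms(2) unfolding same_cell_def restr_def by auto
  then show ?thesis using c unfolding cell_def by auto
qed

lemma regions_cells: assumes "finite S" shows "regions A S = {cell A S x | x. x \<in> cmpl A S}"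
proof (rule set_eqI)
  fix R have f: "finite S" using assms .
  show "R \<in> regions A S \<longleftrightarrow> R \<in> {cell A S x | x. x \<in> cmpl A S}"
    unfolding regions_def using cell_in_cc[OF _ f finA] by auto
qed

lemma conn_restr:
  assumes "conn A S x i j" "i \<in> D" "\<And>m. conn A S x i m \<Longrightarrow> m \<in> S \<Longrightarrow> m \<in> D"
  shows "conn A D (restr x D) i j"
  using assms(1)
proof (induction rule: rtranclp_induct)
  case base then show ?case by simp
next
  case (step m m')
  have m'S: "m' \<in> S" "m \<in> S" using step(2) unfolding edge_def by auto
  have "conn A S x i m'" using step(1,2) by auto
  then have m'D: "m' \<in> D" using assms(3) m'S by auto
  have mD: "m \<in> D" using assms(3) step(1) m'S by auto
  have "edge A D (restr x D) m m'" using step(2) mD m'D unfolding edge_def restr_def by auto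
  then show ?case using step(3) by auto
qed

lemma comp_good:
  assumes fin: "finite S" and x: "x \<in> cmpl A S" and D: "D \<in> comps A S x"
  shows "good D (restr x D) [D]"
proof -
  obtain i0 where i0: "i0 \<in> S" "D = comp A S x i0" using D unfolding comps_def by auto
  have DS: "D \<subseteq> S" using comps_sub[OF D] .
  have "comp A D (restr x D) i = D" if i: "i \<in> D" for i
  proof
    show "comp A D (restr x D) i \<subseteq> D" unfolding comp_def by auto
    show "D \<subseteq> comp A D (restr x D) i"
    proof
      fix j assume j: "j \<in> D"
      have Di: "D = comp A S x i" using comp_eq i i0 by blast
      then have "conn A S x i j" using j unfolding comp_def by auto
      moreover have "m \<in> D" if "conn A S x i m" "m \<in> S" for m using that Di unfolding comp_def by auto
      ultimately have "conn A D (restr x D) i j" using conn_restr i by blast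
      then show "j \<in> comp A D (restr x D) i" using j unfolding comp_def by auto
    qed
  qed
  moreover have "D \<noteq> {}" using comps_ne[OF D] .
  ultimately have "comps A D (restr x D) = {D}" unfolding comps_def by auto
  then show ?thesis unfolding good_def by simp
qed

lemma comp_level1:
  assumes fin: "finite S" and x: "x \<in> cmpl A S" and D: "D \<in> comps A S x"
  shows "level D (cell A D (restr x D)) = 1"
proof -
  have "finite D" using finite_subset[OF comps_sub[OF D] fin] .
  moreover have "restr x D \<in> cmpl A D" using restr_cmpl[OF x comps_sub[OF D]] .
  ultimately show ?thesis using cell_level comp_good[OF assms] by fastforce
qed

lemma level1_conn:
  assumes fin: "finite D" and y: "y \<in> cmpl A D" and l: "level D (cell A D y) = 1"
    and i: "i \<in> D" and j: "j \<in> D"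
  shows "conn A D y i j"
proof -
  obtain Ds where g: "good D y Ds" using good_exists[OF fin y] by blast
  have "length Ds = 1" using cell_level[OF fin y g] l by simp
  then have "set Ds = {Ds!0}" by (cases Ds) auto
  then have c: "comps A D y = {Ds!0}" using g unfolding good_def by simp
  have "comp A D y i = Ds!0" "comp A D y j = Ds!0" using c i j unfolding comps_def by auto
  then have "j \<in> comp A D y i" using comp_self[OF j, of y] by simp
  then show ?thesis unfolding comp_def by auto
qed

lemma G1_edge_cell: "x0 \<in> cmpl A {1..n} \<Longrightarrow> G1_edge A n (cell A {1..n} x0) = edge A {1..n} x0"
proof (intro ext)
  fix i j assume x0: "x0 \<in> cmpl A {1..n}"
  show "G1_edge A n (cell A {1..n} x0) i j = edge A {1..n} x0 i j"
  proof
    assume "G1_edge A n (cell A {1..n} x0) i j"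
    then show "edge A {1..n} x0 i j" using self_in_cell[OF x0] unfolding G1_edge_def edge_def by auto
  next
    assume e: "edge A {1..n} x0 i j"
    have "\<bar>x i - x j\<bar> < a1 A" if "x \<in> cell A {1..n} x0" for x
    proof -
      have "edge A {1..n} x i j" using e edge_cell[OF that x0] by simp
      then show ?thesis unfolding edge_def by auto
    qed
    then show "G1_edge A n (cell A {1..n} x0) i j" using e unfolding G1_edge_def edge_def by auto
  qed
qed

lemma G1_comps_cell: assumes "x0 \<in> cmpl A {1..n}" shows "G1_components A n (cell A {1..n} x0) = comps A {1..n} x0"
proof -
  have e: "G1_edge A n (cell A {1..n} x0) = edge A {1..n} x0" using G1_edge_cell[OF assms] .
  show ?thesis unfolding G1_components_def e comps_def comp_def by (simp only: Setcompr_eq_image)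
qed

lemma ord_cell:
  assumes x0: "x0 \<in> cmpl A S" and C: "C \<subseteq> S" and C': "C' \<subseteq> S"
  shows "(\<forall>i\<in>C. \<forall>j\<in>C'. \<forall>x\<in>cell A S x0. x j - x i > a1 A) \<longleftrightarrow> lt A x0 C C'"
proof
  assume "\<forall>i\<in>C. \<forall>j\<in>C'. \<forall>x\<in>cell A S x0. x j - x i > a1 A"
  then show "lt A x0 C C'" unfolding lt_def using self_in_cell[OF x0] by blast
next
  assume l: "lt A x0 C C'"
  show "\<forall>i\<in>C. \<forall>j\<in>C'. \<forall>x\<in>cell A S x0. x j - x i > a1 A"
  proof (intro ballI)
    fix i j x assume i: "i \<in> C" and j: "j \<in> C'" and x: "x \<in> cell A S x0"
    have d: "x0 j - x0 i > a1 A" using l i j unfolding lt_def by auto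
    then have "j \<noteq> i" using a1_pos by auto
    moreover have "same_cell A S x0 x" "x \<in> cmpl A S" using x unfolding cell_def by simp_all
    moreover have "j \<in> S" "i \<in> S" using i j C C' by (simp_all add: subset_iff)
    ultimately have "x0 j - x0 i > a1 A \<longleftrightarrow> x j - x i > a1 A"
      using same_cell_gt[of S x0 x j i "a1 A"] x0 a1_in by blast
    then show "x j - x i > a1 A" using d by blast
  qed
qed

lemma all_pairs_cong: "(\<And>u v. u < v \<Longrightarrow> v < l \<Longrightarrow> X u v = Y u v) \<Longrightarrow>
  (\<forall>u v. u < v \<and> v < l \<longrightarrow> X u v) = (\<forall>u v. u < v \<and> v < l \<longrightarrow> Y u v)"
  by auto

lemma good_order_iff:
  assumes x0: "x0 \<in> cmpl A {1..n}"
  shows "good_order A n (cell A {1..n} x0) Ds \<longleftrightarrow> good {1..n} x0 Ds"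
proof -
  define P where "P = (\<forall>u v. u < v \<and> v < length Ds \<longrightarrow> (\<forall>i\<in>Ds!u. \<forall>j\<in>Ds!v. \<forall>x\<in>cell A {1..n} x0. x j - x i > a1 A))"
  define Q where "Q = (\<forall>u v. u < v \<and> v < length Ds \<longrightarrow> lt A x0 (Ds!u) (Ds!v))"
  have sub: "Ds!u \<subseteq> {1..n}" if "set Ds = comps A {1..n} x0" "u < length Ds" for u
  proof -
    have "Ds!u \<in> set Ds" using that(2) by simp
    then show ?thesis using comps_sub that(1) by auto
  qed
  have PQ: "P \<longleftrightarrow> Q" if s: "set Ds = comps A {1..n} x0"
  proof -
    have "(\<forall>i\<in>Ds!u. \<forall>j\<in>Ds!v. \<forall>x\<in>cell A {1..n} x0. x j - x i > a1 A) \<longleftrightarrow> lt A x0 (Ds!u) (Ds!v)"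
      if "u < v" "v < length Ds" for u v
      by (rule ord_cell[OF x0 sub[OF s less_trans[OF that]] sub[OF s that(2)]])
    then show ?thesis unfolding P_def Q_def by (rule all_pairs_cong)
  qed
  have e1: "good_order A n (cell A {1..n} x0) Ds \<longleftrightarrow> set Ds = comps A {1..n} x0 \<and> distinct Ds \<and> P"
    unfolding good_order_def P_def G1_comps_cell[OF x0] by (rule refl)
  have e2: "good {1..n} x0 Ds \<longleftrightarrow> set Ds = comps A {1..n} x0 \<and> distinct Ds \<and> Q"
    unfolding good_def Q_def by (rule refl)
  show ?thesis unfolding e1 e2 using PQ by blast
qed

end



context arr begin

lemma phi_char:
  assumes x0: "x0 \<in> cmpl A {1..n}" and g: "good {1..n} x0 Ds"
  shows "phi A n (cell A {1..n} x0) = (Ds, map (\<lambda>D. cell A D (restr x0 D)) Ds)"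
proof -
  have fin: "finite {1..n::nat}" by simp
  have the: "(THE Ds. good_order A n (cell A {1..n} x0) Ds) = Ds"
  proof (rule the_equality)
    show "good_order A n (cell A {1..n} x0) Ds" using good_order_iff[OF x0] g by simp
    show "Ds' = Ds" if "good_order A n (cell A {1..n} x0) Ds'" for Ds'
      using good_unique[OF fin x0] good_order_iff[OF x0] that g by blast
  qed
  define x' where "x' = (SOME x. x \<in> cell A {1..n} x0)"
  have x': "x' \<in> cell A {1..n} x0" unfolding x'_def using self_in_cell[OF x0] by (rule someI[of "\<lambda>x. x \<in> cell A {1..n} x0"])
  have "connected_component_set (cmpl A D) (restr x' D) = cell A D (restr x0 D)" if D: "D \<in> set Ds" for D
  proof -
    have DS: "D \<subseteq> {1..n}" using D g comps_sub unfolding good_def by auto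
    have fD: "finite D" using finite_subset[OF DS fin] .
    have rc: "restr x' D \<in> cmpl A D" using restr_cmpl[OF _ DS] x' unfolding cell_def by auto
    have "connected_component_set (cmpl A D) (restr x' D) = cell A D (restr x' D)"
      using cell_in_cc[OF rc fD finA] .
    also have "\<dots> = cell A D (restr x0 D)" using cell_eq'[OF restr_cell[OF x' DS]] .
    finally show ?thesis .
  qed
  then show ?thesis unfolding phi_def Let_def the x'_def[symmetric] by simp
qed

lemma reg_info:
  assumes "\<Omega> \<in> regions_level A {1..n} \<omega>"
  shows "\<exists>x0 Ds. x0 \<in> cmpl A {1..n} \<and> \<Omega> = cell A {1..n} x0 \<and> good {1..n} x0 Ds \<and> length Ds = \<omega> \<and>
           phi A n \<Omega> = (Ds, map (\<lambda>D. cell A D (restr x0 D)) Ds)"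
proof -
  have fin: "finite {1..n::nat}" by simp
  obtain x0 where x0: "x0 \<in> cmpl A {1..n}" "\<Omega> = cell A {1..n} x0"
    using assms regions_cells[OF fin] unfolding regions_level_def by auto
  obtain Ds where g: "good {1..n} x0 Ds" using good_exists[OF fin x0(1)] by blast
  have "length Ds = \<omega>" using cell_level[OF fin x0(1) g] assms x0(2) unfolding regions_level_def by auto
  then show ?thesis using x0 g phi_char[OF x0(1) g] by blast
qed

lemma block_region:
  assumes x0: "x0 \<in> cmpl A {1..n}" and g: "good {1..n} x0 Ds" and D: "D \<in> set Ds"
  shows "cell A D (restr x0 D) \<in> regions_level A D 1"
proof -
  have fin: "finite {1..n::nat}" by simp
  have Dc: "D \<in> comps A {1..n} x0" using D g unfolding good_def by auto
  have DS: "D \<subseteq> {1..n}" using comps_sub[OF Dc] .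
  have fD: "finite D" using finite_subset[OF DS fin] .
  have rc: "restr x0 D \<in> cmpl A D" using restr_cmpl[OF x0 DS] .
  show ?thesis unfolding regions_level_def regions_cells[OF fD]
    using rc comp_level1[OF fin x0 Dc] by auto
qed


lemma surj_part:
  assumes op: "ordered_partition n \<omega> Ds" and lR: "length Rs = \<omega>"
    and R: "\<forall>j<\<omega>. Rs!j \<in> regions_level A (Ds!j) 1"
  shows "\<exists>\<Omega>\<in>regions_level A {1..n} \<omega>. phi A n \<Omega> = (Ds, Rs)"
proof -
  define S where "S = {1..n::nat}"
  have fin: "finite S" unfolding S_def by simp
  have lD: "length Ds = \<omega>" and ne: "\<And>j. j < \<omega> \<Longrightarrow> Ds!j \<noteq> {}"
    and dj: "\<And>u v. u < \<omega> \<Longrightarrow> v < \<omega> \<Longrightarrow> u \<noteq> v \<Longrightarrow> Ds!u \<inter> Ds!v = {}"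
    and un: "\<Union>(set Ds) = S" using op unfolding ordered_partition_def S_def by auto
  have DS: "Ds!u \<subseteq> S" if "u < \<omega>" for u using un that lD by (metis Union_upper nth_mem)
  have fD: "finite (Ds!u)" if "u < \<omega>" for u using finite_subset[OF DS[OF that] fin] .
  define Y where "Y = (\<lambda>u. SOME y. y \<in> cmpl A (Ds!u) \<and> Rs!u = cell A (Ds!u) y)"
  have Y: "Y u \<in> cmpl A (Ds!u) \<and> Rs!u = cell A (Ds!u) (Y u)" if u: "u < \<omega>" for u
  proof -
    have "Rs!u \<in> regions A (Ds!u)" using R u unfolding regions_level_def by auto
    then have "\<exists>y. y \<in> cmpl A (Ds!u) \<and> Rs!u = cell A (Ds!u) y" using regions_cells[OF fD[OF u]] by auto
    then show ?thesis unfolding Y_def by (rule someI_ex)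
  qed
  have Yconn: "conn A (Ds!u) (Y u) i j" if "u < \<omega>" "i \<in> Ds!u" "j \<in> Ds!u" for u i j
  proof -
    have "level (Ds!u) (Rs!u) = 1" using R that(1) unfolding regions_level_def by auto
    then show ?thesis using level1_conn[OF fD[OF that(1)]] Y[OF that(1)] that by auto
  qed
  define b where "b = (\<lambda>i. THE u. u < \<omega> \<and> i \<in> Ds!u)"
  have uniq: "u = u'" if "u < \<omega>" "u' < \<omega>" "i \<in> Ds!u" "i \<in> Ds!u'" for u u' i
    using dj that by blast
  have b_eq: "b i = u" if "u < \<omega>" "i \<in> Ds!u" for i u
    unfolding b_def using uniq that by (intro the_equality) auto
  have b_spec: "b i < \<omega> \<and> i \<in> Ds!(b i)" if iS: "i \<in> S" for i
  proof -
    obtain D where "D \<in> set Ds" "i \<in> D" using un iS by auto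
    then obtain u where "u < \<omega>" "i \<in> Ds!u" using lD by (auto simp: in_set_conv_nth)
    then show ?thesis using b_eq by auto
  qed
  define T where "T = (\<Sum>u<\<omega>. \<Sum>i\<in>Ds!u. \<bar>Y u i\<bar>)"
  have Tb: "\<bar>Y u i\<bar> \<le> T" if "u < \<omega>" "i \<in> Ds!u" for u i
  proof -
    have "\<bar>Y u i\<bar> \<le> (\<Sum>i\<in>Ds!u. \<bar>Y u i\<bar>)" using that fD by (intro member_le_sum) auto
    also have "\<dots> \<le> T" unfolding T_def using that
      by (intro member_le_sum[of u _ "\<lambda>u. \<Sum>i\<in>Ds!u. \<bar>Y u i\<bar>"]) (auto intro: sum_nonneg)
    finally show ?thesis .
  qed
  have T0: "T \<ge> 0" unfolding T_def by (intro sum_nonneg) auto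
  define K where "K = 2 * T + 2 * a1 A"
  have K0: "K \<ge> 0" unfolding K_def using T0 a1_pos by simp
  define x0 where "x0 = (\<lambda>i. if i \<in> S then Y (b i) i + real (b i) * K else 0)"
  have x0D: "x0 i = Y u i + real u * K" if "u < \<omega>" "i \<in> Ds!u" for u i
    unfolding x0_def using that DS b_eq by auto
  have sep: "x0 j - x0 i > a1 A" if "u < v" "v < \<omega>" "i \<in> Ds!u" "j \<in> Ds!v" for u v i j
  proof -
    have "real v - real u \<ge> 1" using that by simp
    then have m: "(real v - real u) * K \<ge> 1 * K" using K0 by (intro mult_right_mono) auto
    have t1: "\<bar>Y u i\<bar> \<le> T" and t2: "\<bar>Y v j\<bar> \<le> T" using Tb that by auto
    have e: "x0 j - x0 i = Y v j - Y u i + (real v - real u) * K"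
      using x0D[of u i] x0D[of v j] that by (simp add: algebra_simps)
    have k: "K = 2 * T + 2 * a1 A" unfolding K_def ..
    show ?thesis using m t1 t2 e k a1_pos unfolding abs_le_iff by linarith
  qed
  have same_blk: "x0 i - x0 j = Y u i - Y u j" if "u < \<omega>" "i \<in> Ds!u" "j \<in> Ds!u" for u i j
    using x0D that by simp
  have x0c: "x0 \<in> cmpl A S"
  proof -
    have "x0 i - x0 j \<noteq> a" if "i \<in> S" "j \<in> S" "i \<noteq> j" "a \<in> A" for i j a
    proof -
      have a: "0 < a" "a \<le> a1 A" using posA a1_ge that by auto
      consider "b i = b j" | "b i < b j" | "b j < b i" by linarith
      then show ?thesis
      proof cases
        case 1
        then have "x0 i - x0 j = Y (b i) i - Y (b i) j"
          using same_blk[of "b i" i j] b_spec[OF that(1)] b_spec[OF that(2)] by simp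
        moreover have "Y (b i) i - Y (b i) j \<noteq> a"
          using cmpl_ne[OF conjunct1[OF Y[of "b i"]], of i j a] b_spec[OF that(1)] b_spec[OF that(2)] that 1 by simp
        ultimately show ?thesis by simp
      next
        case 2 then show ?thesis using sep[of "b i" "b j" i j] b_spec that a by auto
      next
        case 3 then show ?thesis using sep[of "b j" "b i" j i] b_spec that a by auto
      qed
    qed
    then show ?thesis unfolding cmpl_def carrierS_def x0_def by auto
  qed
  have edge_in: "edge A (Ds!u) (Y u) \<le> edge A S x0" if "u < \<omega>" for u
  proof (intro le_funI le_boolI)
    fix m m' assume "edge A (Ds!u) (Y u) m m'"
    then show "edge A S x0 m m'" unfolding edge_def using same_blk[OF that] DS[OF that] by auto
  qed
  have conn_blk: "b j = b i" if "conn A S x0 i j" "i \<in> S" for i j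
    using that(1)
  proof (induction rule: rtranclp_induct)
    case base then show ?case by simp
  next
    case (step m m')
    have mm: "m \<in> S" "m' \<in> S" "\<bar>x0 m - x0 m'\<bar> < a1 A" using step(2) unfolding edge_def by auto
    have "b m' = b m"
    proof (rule ccontr)
      assume "b m' \<noteq> b m"
      then consider "b m < b m'" | "b m' < b m" by linarith
      then show False
      proof cases
        case 1 then show ?thesis using sep[of "b m" "b m'" m m'] b_spec mm by auto
      next
        case 2 then show ?thesis using sep[of "b m'" "b m" m' m] b_spec mm by auto
      qed
    qed
    then show ?case using step(3) by simp
  qed
  have compeq: "comp A S x0 i = Ds!(b i)" if i: "i \<in> S" for i
  proof
    show "comp A S x0 i \<subseteq> Ds!(b i)"
    proof
      fix j assume "j \<in> comp A S x0 i"
      then have "conn A S x0 i j" "j \<in> S" unfolding comp_def by auto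
      then show "j \<in> Ds!(b i)" using conn_blk i b_spec by metis
    qed
    show "Ds!(b i) \<subseteq> comp A S x0 i"
    proof
      fix j assume j: "j \<in> Ds!(b i)"
      have "conn A (Ds!(b i)) (Y (b i)) i j" using Yconn b_spec[OF i] j by auto
      then have "conn A S x0 i j" using rtranclp_mono[OF edge_in[of "b i"]] b_spec[OF i] by auto
      then show "j \<in> comp A S x0 i" using j DS b_spec[OF i] unfolding comp_def by auto
    qed
  qed
  have comps_eq: "comps A S x0 = set Ds"
  proof
    show "comps A S x0 \<subseteq> set Ds" unfolding comps_def using compeq b_spec lD by auto
    show "set Ds \<subseteq> comps A S x0"
    proof
      fix D assume "D \<in> set Ds"
      then obtain u where u: "u < \<omega>" "D = Ds!u" using lD by (auto simp: in_set_conv_nth)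
      then obtain i where i: "i \<in> Ds!u" using ne by blast
      have "i \<in> S" using DS u i by auto
      then have "comp A S x0 i = D" using compeq b_eq u i by auto
      then show "D \<in> comps A S x0" using \<open>i \<in> S\<close> unfolding comps_def by auto
    qed
  qed
  have dist: "distinct Ds"
    unfolding distinct_conv_nth
  proof (intro allI impI)
    fix u v assume "u < length Ds" "v < length Ds" "u \<noteq> v"
    then show "Ds!u \<noteq> Ds!v" using dj ne lD by fastforce
  qed
  have g: "good S x0 Ds" unfolding good_def lt_def using comps_eq dist sep lD by auto
  define \<Omega> where "\<Omega> = cell A S x0"
  have "\<Omega> \<in> regions A S" unfolding \<Omega>_def regions_cells[OF fin] using x0c by auto
  moreover have "level S \<Omega> = \<omega>" unfolding \<Omega>_def using cell_level[OF fin x0c g] lD by simp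
  ultimately have reg: "\<Omega> \<in> regions_level A {1..n} \<omega>" unfolding regions_level_def S_def by auto
  have "map (\<lambda>D. cell A D (restr x0 D)) Ds = Rs"
  proof (rule nth_equalityI)
    show "length (map (\<lambda>D. cell A D (restr x0 D)) Ds) = length Rs" using lD lR by simp
    fix u assume "u < length (map (\<lambda>D. cell A D (restr x0 D)) Ds)"
    then have u: "u < \<omega>" using lD by simp
    have "same_cell A (Ds!u) (restr x0 (Ds!u)) (Y u)"
      unfolding same_cell_def restr_def using same_blk[OF u] by auto
    then have "cell A (Ds!u) (restr x0 (Ds!u)) = cell A (Ds!u) (Y u)" by (rule cell_eq)
    then show "map (\<lambda>D. cell A D (restr x0 D)) Ds ! u = Rs ! u" using Y[OF u] u lD by simp
  qed
  then have "phi A n \<Omega> = (Ds, Rs)" using phi_char[of x0 n Ds] x0c g unfolding \<Omega>_def S_def by simp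
  then show ?thesis using reg by blast
qed


lemma blocks_cover:
  assumes g: "good S x Ds" and i: "i \<in> S"
  shows "\<exists>u<length Ds. i \<in> Ds!u"
proof -
  have "comp A S x i \<in> set Ds" using g i unfolding good_def comps_def by auto
  then obtain u where "u < length Ds" "Ds!u = comp A S x i" by (auto simp: in_set_conv_nth)
  then show ?thesis using comp_self[OF i, of x] by auto
qed

lemma inj_part:
  assumes r1: "\<Omega>1 \<in> regions_level A {1..n} \<omega>" and r2: "\<Omega>2 \<in> regions_level A {1..n} \<omega>"
    and eq: "phi A n \<Omega>1 = phi A n \<Omega>2"
  shows "\<Omega>1 = \<Omega>2"
proof -
  obtain x1 Ds1 where I1: "x1 \<in> cmpl A {1..n}" "\<Omega>1 = cell A {1..n} x1" "good {1..n} x1 Ds1" "length Ds1 = \<omega>"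
    "phi A n \<Omega>1 = (Ds1, map (\<lambda>D. cell A D (restr x1 D)) Ds1)" using reg_info[OF r1] by blast
  obtain x2 Ds2 where I2: "x2 \<in> cmpl A {1..n}" "\<Omega>2 = cell A {1..n} x2" "good {1..n} x2 Ds2" "length Ds2 = \<omega>"
    "phi A n \<Omega>2 = (Ds2, map (\<lambda>D. cell A D (restr x2 D)) Ds2)" using reg_info[OF r2] by blast
  have D12: "Ds1 = Ds2" using eq I1(5) I2(5) by simp
  have ceq: "cell A (Ds1!u) (restr x1 (Ds1!u)) = cell A (Ds1!u) (restr x2 (Ds1!u))" if "u < \<omega>" for u
  proof -
    have m: "map (\<lambda>D. cell A D (restr x1 D)) Ds1 = map (\<lambda>D. cell A D (restr x2 D)) Ds1"
      using eq I1(5) I2(5) D12 by (simp only: prod.inject)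
    show ?thesis using arg_cong[OF m, of "\<lambda>l. l ! u"] that I1(4) by simp
  qed
  have sub: "Ds1!u \<subseteq> {1..n}" if "u < \<omega>" for u
  proof -
    have "Ds1!u \<in> set Ds1" using that I1(4) by simp
    then show ?thesis using I1(3) comps_sub unfolding good_def by auto
  qed
  have "same_cell A {1..n} x1 x2" unfolding same_cell_def
  proof (intro ballI impI)
    fix i j a assume i: "i \<in> {1..n}" and j: "j \<in> {1..n}" and a: "a \<in> A" and ij: "i \<noteq> j"
    obtain u where u: "u < \<omega>" "i \<in> Ds1!u" using blocks_cover[OF I1(3) i] I1(4) by auto
    obtain v where v: "v < \<omega>" "j \<in> Ds1!v" using blocks_cover[OF I1(3) j] I1(4) by auto
    have apos: "a > 0" "a \<le> a1 A" using a posA a1_ge by auto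
    consider "u = v" | "u < v" | "v < u" by linarith
    then show "x1 i - x1 j < a \<longleftrightarrow> x2 i - x2 j < a"
    proof cases
      case 1
      define D where "D = Ds1!u"
      have rc: "restr x2 D \<in> cmpl A D" using restr_cmpl[OF I2(1) sub[OF u(1)]] unfolding D_def .
      have "restr x2 D \<in> cell A D (restr x1 D)" using self_in_cell[OF rc] ceq[OF u(1)] unfolding D_def by simp
      then have "same_cell A D (restr x1 D) (restr x2 D)" unfolding cell_def by simp
      moreover have "i \<in> D" "j \<in> D" using u v 1 unfolding D_def by auto
      ultimately show ?thesis using a ij unfolding same_cell_def restr_def by auto
    next
      case 2
      have "lt A x1 (Ds1!u) (Ds1!v)" "lt A x2 (Ds1!u) (Ds1!v)"
        using I1(3) I2(3) D12 2 v I1(4) unfolding good_def by auto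
      then have "x1 j - x1 i > a1 A" "x2 j - x2 i > a1 A" using u v unfolding lt_def by auto
      then show ?thesis using apos by auto
    next
      case 3
      have "lt A x1 (Ds1!v) (Ds1!u)" "lt A x2 (Ds1!v) (Ds1!u)"
        using I1(3) I2(3) D12 3 u I1(4) unfolding good_def by auto
      then have "x1 i - x1 j > a1 A" "x2 i - x2 j > a1 A" using u v unfolding lt_def by auto
      then show ?thesis using apos by auto
    qed
  qed
  then show ?thesis using I1(2) I2(2) cell_eq by simp
qed

lemma into_target:
  assumes r: "\<Omega> \<in> regions_level A {1..n} \<omega>"
  shows "phi A n \<Omega> \<in> target A n \<omega>"
proof -
  obtain x0 Ds where I: "x0 \<in> cmpl A {1..n}" "\<Omega> = cell A {1..n} x0" "good {1..n} x0 Ds" "length Ds = \<omega>"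
    "phi A n \<Omega> = (Ds, map (\<lambda>D. cell A D (restr x0 D)) Ds)" using reg_info[OF r] by blast
  have set: "set Ds = comps A {1..n} x0" and dist: "distinct Ds" using I(3) unfolding good_def by auto
  have mem: "Ds!j \<in> comps A {1..n} x0" if "j < \<omega>" for j using set that I(4) by (metis nth_mem)
  have "ordered_partition n \<omega> Ds"
    unfolding ordered_partition_def
  proof (intro conjI allI impI)
    show "length Ds = \<omega>" by (rule I(4))
    show "Ds!j \<noteq> {}" if "j < \<omega>" for j using comps_ne[OF mem[OF that]] .
    show "Ds!u \<inter> Ds!v = {}" if "u < \<omega>" "v < \<omega>" "u \<noteq> v" for u v
    proof -
      have "Ds!u \<noteq> Ds!v" using dist that I(4) by (simp add: nth_eq_iff_index_eq)
      then show ?thesis using comps_disj[OF mem[OF that(1)] mem[OF that(2)]] by blast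
    qed
    show "\<Union>(set Ds) = {1..n}" using set comps_union by simp
  qed
  moreover have "map (\<lambda>D. cell A D (restr x0 D)) Ds ! j \<in> regions_level A (Ds!j) 1" if "j < \<omega>" for j
    using block_region[OF I(1) I(3)] that I(4) by simp
  ultimately show ?thesis unfolding target_def using I(4,5) by auto
qed

end




theorem lemma3p6:
  fixes A :: "real set" and n \<omega> :: nat
  assumes "finite A" and "A \<noteq> {}" and "\<forall>a\<in>A. a > 0"
    and "n \<ge> 1" and "\<omega> \<ge> 1"
  shows "(\<forall>\<Omega>\<in>regions_level A {1..n} \<omega>.
            card (G1_components A n \<Omega>) = \<omega> \<and>
            (\<exists>!Ds. good_order A n \<Omega> Ds) \<and>
            (\<forall>x\<in>\<Omega>. \<forall>j<\<omega>. restr x (fst (phi A n \<Omega>) ! j) \<in> snd (phi A n \<Omega>) ! j) \<and>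
            (\<forall>j<\<omega>. snd (phi A n \<Omega>) ! j \<in> regions_level A (fst (phi A n \<Omega>) ! j) 1))
         \<and> bij_betw (phi A n) (regions_level A {1..n} \<omega>) (target A n \<omega>)"
proof -
  interpret arr A using assms(1-3) by unfold_locales
  have fin: "finite {1..n}" by simp
  have part1: "card (G1_components A n \<Omega>) = \<omega> \<and>
            (\<exists>!Ds. good_order A n \<Omega> Ds) \<and>
            (\<forall>x\<in>\<Omega>. \<forall>j<\<omega>. restr x (fst (phi A n \<Omega>) ! j) \<in> snd (phi A n \<Omega>) ! j) \<and>
            (\<forall>j<\<omega>. snd (phi A n \<Omega>) ! j \<in> regions_level A (fst (phi A n \<Omega>) ! j) 1)"
    if r: "\<Omega> \<in> regions_level A {1..n} \<omega>" for \<Omega>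
  proof -
    obtain x0 Ds where I: "x0 \<in> cmpl A {1..n}" "\<Omega> = cell A {1..n} x0" "good {1..n} x0 Ds" "length Ds = \<omega>"
      "phi A n \<Omega> = (Ds, map (\<lambda>D. cell A D (restr x0 D)) Ds)" using reg_info[OF r] by blast
    have set: "set Ds = comps A {1..n} x0" and dist: "distinct Ds" using I(3) unfolding good_def by auto
    have sub: "Ds!j \<subseteq> {1..n}" if "j < \<omega>" for j
    proof -
      have "Ds!j \<in> set Ds" using that I(4) by simp
      then show ?thesis using set comps_sub by auto
    qed
    have "G1_components A n \<Omega> = set Ds" using G1_comps_cell[OF I(1)] I(2) set by simp
    then have a: "card (G1_components A n \<Omega>) = \<omega>" using distinct_card[OF dist] I(4) by simp
    have b: "\<exists>!Ds. good_order A n \<Omega> Ds"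
    proof (rule ex1I[of _ Ds])
      show "good_order A n \<Omega> Ds" using good_order_iff[OF I(1)] I(2,3) by simp
      show "Ds' = Ds" if "good_order A n \<Omega> Ds'" for Ds'
      proof -
        have "good {1..n} x0 Ds'" using good_order_iff[OF I(1)] I(2) that by simp
        then show ?thesis using good_unique[OF fin I(1) _ I(3)] by simp
      qed
    qed
    have c: "\<forall>x\<in>\<Omega>. \<forall>j<\<omega>. restr x (fst (phi A n \<Omega>) ! j) \<in> snd (phi A n \<Omega>) ! j"
    proof (intro ballI allI impI)
      fix x j assume x: "x \<in> \<Omega>" and j: "j < \<omega>"
        have "x \<in> cell A {1..n} x0" using x I(2) by simp
      then have "restr x (Ds!j) \<in> cell A (Ds!j) (restr x0 (Ds!j))" using restr_cell sub[OF j] by blast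
      then show "restr x (fst (phi A n \<Omega>) ! j) \<in> snd (phi A n \<Omega>) ! j"
        using I(4,5) j by simp
    qed
    have d: "\<forall>j<\<omega>. snd (phi A n \<Omega>) ! j \<in> regions_level A (fst (phi A n \<Omega>) ! j) 1"
      using block_region[OF I(1) I(3)] I(4,5) by simp
    show ?thesis using a b c d by blast
  qed
  have bij: "bij_betw (phi A n) (regions_level A {1..n} \<omega>) (target A n \<omega>)"
    unfolding bij_betw_def
  proof
    show "inj_on (phi A n) (regions_level A {1..n} \<omega>)"
    proof (rule inj_onI)
      fix a b assume "a \<in> regions_level A {1..n} \<omega>" "b \<in> regions_level A {1..n} \<omega>" "phi A n a = phi A n b"
      then show "a = b" by (rule inj_part)
    qed
    show "phi A n ` regions_level A {1..n} \<omega> = target A n \<omega>"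
    proof
      show "phi A n ` regions_level A {1..n} \<omega> \<subseteq> target A n \<omega>" using into_target by blast
      show "target A n \<omega> \<subseteq> phi A n ` regions_level A {1..n} \<omega>"
      proof
        fix p assume "p \<in> target A n \<omega>"
        then obtain Ds Rs where p: "p = (Ds, Rs)" "ordered_partition n \<omega> Ds" "length Rs = \<omega>"
          "\<forall>j<\<omega>. Rs!j \<in> regions_level A (Ds!j) 1" unfolding target_def by auto
        obtain \<Omega> where "\<Omega> \<in> regions_level A {1..n} \<omega>" "phi A n \<Omega> = (Ds, Rs)"
          using surj_part[OF p(2-4)] by blast
        then show "p \<in> phi A n ` regions_level A {1..n} \<omega>" using p(1) by (intro image_eqI[of _ _ \<Omega>]) auto
      qed
    qed
  qed
  show ?thesis using part1 bij by (intro conjI ballI) auto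
qed


end
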